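(* For every $D\in\mathrm{SL}(d+1,\mathbb R)\setminus\mathrm{SO}(d+1)$ there exist $n>0$, $R_0,R_1,\dots,R_n\in\mathrm{SO}(d+1)$ and $\alpha_1,\dots,\alpha_n\in\{-1,+1\}$ such that $$R_0D^{\alpha_1}R_1D^{\alpha_2}R_2\cdots R_{n-1}D^{\alpha_n}R_n=\mathrm{diag}(r_1,\dots,r_{d+1})$$ with $0<r_{d+1}<\min_{1\le i\le d}r_i$ and $\max_{1<i\le d}r_i^d<r_1\cdots r_d$. *)

theory Defs
  imports "Jordan_Normal_Form.Determinant"
begin

text \<open>Real (d+1)x(d+1) matrices; indices are 0-based in JNF.\<close>

definition SL_mat :: "nat \<Rightarrow> real mat set" where
  "SL_mat m = {A \<in> carrier_mat m m. det A = 1}"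

definition SO_mat :: "nat \<Rightarrow> real mat set" where
  "SO_mat m = {A \<in> carrier_mat m m. transpose_mat A * A = 1\<^sub>m m \<and> det A = 1}"

definition mat_inv :: "nat \<Rightarrow> real mat \<Rightarrow> real mat" where
  "mat_inv m A = (SOME B. B \<in> carrier_mat m m \<and> A * B = 1\<^sub>m m \<and> B * A = 1\<^sub>m m)"

definition mat_pm_pow :: "nat \<Rightarrow> real mat \<Rightarrow> int \<Rightarrow> real mat" where
  "mat_pm_pow m D a = (if a = 1 then D else mat_inv m D)"

fun word_prod :: "nat \<Rightarrow> real mat \<Rightarrow> (nat \<Rightarrow> real mat) \<Rightarrow> (nat \<Rightarrow> int) \<Rightarrow> nat \<Rightarrow> real mat" where
  "word_prod m D R a 0 = R 0"
| "word_prod m D R a (Suc k) = word_prod m D R a k * mat_pm_pow m D (a (Suc k)) * R (Suc k)"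

end

theory Submission
  imports Defs "Jordan_Normal_Form.Char_Poly"
begin

definition hh :: "nat \<Rightarrow> real vec \<Rightarrow> real mat" where
  "hh n u = mat n n (\<lambda>(i,j). (if i = j then 1 else 0) - 2 / (u \<bullet> u) * (u $ i * u $ j))"

lemma hh_carrier[simp]: "hh n u \<in> carrier_mat n n" unfolding hh_def by auto

lemma hh_transpose: "transpose_mat (hh n u) = hh n u"
  unfolding hh_def by (rule eq_matI, auto)

lemma hh_sq: assumes u: "u \<in> carrier_vec n" and c: "u \<bullet> u \<noteq> 0"
  shows "hh n u * hh n u = 1\<^sub>m n"
proof (rule eq_matI)
  fix i j assume i: "i < dim_row (1\<^sub>m n)" and j: "j < dim_col (1\<^sub>m n)"
  define a where "a = 2 / (u \<bullet> u)"
  have uu: "u \<bullet> u = (\<Sum>k<n. u $ k * u $ k)" using u unfolding scalar_prod_def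
    by (simp add: atLeast0LessThan)
  have "(hh n u * hh n u) $$ (i,j) = (\<Sum>k<n. ((if i = k then 1 else 0) - a * (u $ i * u $ k)) *
     ((if k = j then 1 else 0) - a * (u $ k * u $ j)))"
    using i j unfolding hh_def a_def by (simp add: scalar_prod_def atLeast0LessThan)
  also have "\<dots> = (\<Sum>k<n. (if i = k then 1 else 0) * (if k = j then 1 else 0))
     - a * u $ j * (\<Sum>k<n. (if i = k then 1 else 0) * u $ k)
     - a * u $ i * (\<Sum>k<n. (if k = j then 1 else 0) * u $ k)
     + a * a * u $ i * u $ j * (\<Sum>k<n. u $ k * u $ k)"
    by (simp add: algebra_simps sum_distrib_left sum_subtractf sum.distrib)
  also have "\<dots> = (if i = j then 1 else 0) - 2 * a * u $ i * u $ j + a * a * u $ i * u $ j * (u \<bullet> u)"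
    using i j by (simp add: uu if_distrib[of "\<lambda>x. x * _"] cong: if_cong)
  also have "a * a * u $ i * u $ j * (u \<bullet> u) = 2 * a * u $ i * u $ j" using c unfolding a_def
    by (simp add: field_simps)
  finally show "(hh n u * hh n u) $$ (i,j) = 1\<^sub>m n $$ (i,j)" using i j by simp
qed (auto simp: hh_def)

lemma hh_e0: assumes v: "v \<in> carrier_vec n" and n: "0 < n" and vv: "v \<bullet> v = 1" and v0: "v $ 0 \<le> 0"
  defines "u \<equiv> v - unit_vec n 0"
  shows "u \<in> carrier_vec n" "u \<bullet> u \<noteq> 0" "hh n u *\<^sub>v unit_vec n 0 = v"
proof -
  show uc: "u \<in> carrier_vec n" using v unfolding u_def by auto
  have ui: "\<And>k. k < n \<Longrightarrow> u $ k = v $ k - (if k = 0 then 1 else 0)"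
    using v unfolding u_def by (auto simp: unit_vec_def)
  have vv': "(\<Sum>k<n. v $ k * v $ k) = 1" using vv v unfolding scalar_prod_def
    by (simp add: atLeast0LessThan)
  have "u \<bullet> u = (\<Sum>k<n. (v $ k - (if k = 0 then 1 else 0)) * (v $ k - (if k = 0 then 1 else 0)))"
    using uc ui unfolding scalar_prod_def by (simp add: atLeast0LessThan)
  also have "\<dots> = (\<Sum>k<n. v $ k * v $ k) - 2 * (\<Sum>k<n. (if k = 0 then v $ k else 0)) + (\<Sum>k<n. (if k = 0 then 1 else 0))"
  proof -
    have "\<And>k. (v $ k - (if k = 0 then 1 else 0)) * (v $ k - (if k = 0 then 1 else 0)) =
      v $ k * v $ k - 2 * (if k = 0 then v $ k else 0) + (if k = 0 then 1 else 0)" by (auto simp: algebra_simps)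
    thus ?thesis by (simp add: sum_subtractf sum.distrib flip: sum_distrib_left)
  qed
  also have "\<dots> = 2 - 2 * v $ 0" using n vv' by simp
  finally have uu: "u \<bullet> u = 2 - 2 * v $ 0" .
  thus "u \<bullet> u \<noteq> 0" using v0 by simp
  show "hh n u *\<^sub>v unit_vec n 0 = v"
  proof (rule eq_vecI)
    fix i assume i: "i < dim_vec v"
    hence i': "i < n" using v by auto
    have "(hh n u *\<^sub>v unit_vec n 0) $ i = (hh n u) $$ (i, 0)"
      using i' n by (simp add: hh_def scalar_prod_def unit_vec_def if_distrib[of "\<lambda>x. _ * x"] cong: if_cong)
    also have "\<dots> = (if i = 0 then 1 else 0) - 2 / (2 - 2 * v $ 0) * (u $ i * u $ 0)"
      using i' n by (simp add: hh_def uu)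
    also have "\<dots> = v $ i" using v0 i' n by (simp add: ui field_simps)
    finally show "(hh n u *\<^sub>v unit_vec n 0) $ i = v $ i" .
  qed (insert v, auto simp: hh_def)
qed

lemma sym_eigen_real:
  fixes M :: "real mat"
  assumes M: "M \<in> carrier_mat n n" and n: "0 < n" and sym: "transpose_mat M = M"
  shows "\<exists>v r. v \<in> carrier_vec n \<and> v \<noteq> 0\<^sub>v n \<and> M *\<^sub>v v = r \<cdot>\<^sub>v v"
proof -
  let ?Mc = "map_mat complex_of_real M"
  have Mc: "?Mc \<in> carrier_mat n n" using M by auto
  obtain as where cp: "char_poly ?Mc = (\<Prod> a \<leftarrow> as. [:- a, 1:])" and len: "length as = n"
    using char_poly_factorized[OF Mc] by blast
  obtain a where a: "a \<in> set as" using len n by (cases as) auto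
  have "poly (char_poly ?Mc) a = 0" unfolding cp using a
    by (induct as) (auto simp: poly_prod_list)
  hence "eigenvalue ?Mc a" using eigenvalue_root_char_poly[OF Mc] by simp
  then obtain w where w: "w \<in> carrier_vec n" "w \<noteq> 0\<^sub>v n" "?Mc *\<^sub>v w = a \<cdot>\<^sub>v w"
    unfolding eigenvalue_def eigenvector_def using Mc by auto
  have Msym: "\<And>i j. i < n \<Longrightarrow> j < n \<Longrightarrow> M $$ (i,j) = M $$ (j,i)"
    using sym M by (metis carrier_matD index_transpose_mat(1))
  define q where "q = (\<Sum>i<n. \<Sum>j<n. cnj (w $ i) * of_real (M $$ (i,j)) * w $ j)"
  define s where "s = (\<Sum>i<n. cnj (w $ i) * w $ i)"
  have "q = (\<Sum>i<n. cnj (w $ i) * (?Mc *\<^sub>v w) $ i)"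
    unfolding q_def using M w(1)
    by (intro sum.cong refl, simp add: scalar_prod_def atLeast0LessThan sum_distrib_left mult.assoc)
  also have "\<dots> = a * s" unfolding s_def w(3) using w(1)
    by (simp add: sum_distrib_left algebra_simps)
  finally have qa: "q = a * s" .
  have "cnj q = (\<Sum>i<n. \<Sum>j<n. w $ i * of_real (M $$ (i,j)) * cnj (w $ j))"
    unfolding q_def by (simp add: cnj_sum)
  also have "\<dots> = (\<Sum>j<n. \<Sum>i<n. w $ i * of_real (M $$ (i,j)) * cnj (w $ j))"
    by (rule sum.swap)
  also have "\<dots> = q" unfolding q_def
    by (intro sum.cong refl, simp add: Msym mult.commute mult.left_commute)
  finally have cq: "cnj q = q" .
  have s_real: "s = of_real (\<Sum>i<n. (Re (w $ i))^2 + (Im (w $ i))^2)"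
    unfolding s_def of_real_sum by (intro sum.cong refl) (simp add: complex_mult_cnj mult.commute)
  obtain i where i: "i < n" "w $ i \<noteq> 0" using w(1,2) by (metis carrier_vecD eq_vecI index_zero_vec)
  have "(\<Sum>i<n. (Re (w $ i))^2 + (Im (w $ i))^2) > 0"
    by (rule sum_pos2[of _ i], insert i, auto simp: complex_eq_iff add_pos_nonneg sum_power2_gt_zero_iff)
  hence s0: "s \<noteq> 0" unfolding s_real by (metis of_real_eq_0_iff less_irrefl)
  have "cnj a * s = a * s" using cq qa s_real by (metis complex_cnj_complex_of_real complex_cnj_mult)
  hence "cnj a = a" using s0 by simp
  hence ar: "a = of_real (Re a)" by (metis Reals_cnj_iff of_real_Re)
  have "poly (char_poly ?Mc) (of_real (Re a)) = 0" using \<open>poly (char_poly ?Mc) a = 0\<close> ar by simp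
  hence "of_real (poly (char_poly M) (Re a)) = (0::complex)"
    unfolding of_real_hom.char_poly_hom[OF M] of_real_hom.poly_map_poly .
  hence "poly (char_poly M) (Re a) = 0" by simp
  hence "eigenvalue M (Re a)" using eigenvalue_root_char_poly[OF M] by simp
  thus ?thesis unfolding eigenvalue_def eigenvector_def using M by auto
qed

lemma real_vec_sq_pos: assumes v: "(v :: real vec) \<in> carrier_vec n" and v0: "v \<noteq> 0\<^sub>v n"
  shows "v \<bullet> v > 0"
proof -
  obtain i where i: "i < n" "v $ i \<noteq> 0" using v v0 by (metis carrier_vecD eq_vecI index_zero_vec)
  have "v \<bullet> v = (\<Sum>k\<in>{0..<n}. v $ k * v $ k)" using v unfolding scalar_prod_def by simp
  have sq: "\<And>x::real. x \<noteq> 0 \<Longrightarrow> 0 < x * x"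
    by (metis linorder_neqE_linordered_idom mult_neg_neg mult_pos_pos)
  have "(\<Sum>k\<in>{0..<n}. v $ k * v $ k) > 0" by (rule sum_pos2[of _ i], insert i sq, auto)
  with \<open>v \<bullet> v = _\<close> show ?thesis by simp
qed

lemma spectral:
  fixes M :: "real mat"
  assumes "M \<in> carrier_mat n n" and "transpose_mat M = M"
  shows "\<exists>Q \<in> carrier_mat n n. transpose_mat Q * Q = 1\<^sub>m n \<and> diagonal_mat (transpose_mat Q * M * Q)"
  using assms
proof (induct n arbitrary: M)
  case 0
  thus ?case by (intro bexI[of _ "1\<^sub>m 0"], auto simp: diagonal_mat_def)
next
  case (Suc n M)
  let ?m = "Suc n"
  have M: "M \<in> carrier_mat ?m ?m" and sym: "transpose_mat M = M" by fact+
  obtain v r where v: "v \<in> carrier_vec ?m" "v \<noteq> 0\<^sub>v ?m" "M *\<^sub>v v = r \<cdot>\<^sub>v v"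
    using sym_eigen_real[OF M _ sym] by auto
  have vv: "v \<bullet> v > 0" by (rule real_vec_sq_pos[OF v(1,2)])
  define k where "k = (if v $ 0 > 0 then -1 else 1) / sqrt (v \<bullet> v)"
  define w where "w = k \<cdot>\<^sub>v v"
  have wc: "w \<in> carrier_vec ?m" unfolding w_def using v by auto
  have ww: "w \<bullet> w = 1" unfolding w_def using v(1) vv
    by (simp add: k_def power2_eq_square[symmetric])
  have w0: "w $ 0 \<le> 0" unfolding w_def using v(1) vv
    by (auto simp: k_def divide_simps mult_le_0_iff)
  have Mw: "M *\<^sub>v w = r \<cdot>\<^sub>v w" unfolding w_def mult_mat_vec[OF M v(1)] v(3)
    by (simp add: smult_smult_assoc mult.commute)
  define u where "u = w - unit_vec ?m 0"
  define H where "H = hh ?m u"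
  note hh = hh_e0[OF wc _ ww w0, folded u_def]
  have H: "H \<in> carrier_mat ?m ?m" unfolding H_def by simp
  have Ht: "transpose_mat H = H" unfolding H_def by (rule hh_transpose)
  have HH: "H * H = 1\<^sub>m ?m" unfolding H_def by (rule hh_sq, insert hh, auto)
  have He: "H *\<^sub>v unit_vec ?m 0 = w" unfolding H_def using hh by auto
  have Hw: "H *\<^sub>v w = unit_vec ?m 0" unfolding He[symmetric]
    using H by (simp flip: assoc_mult_mat_vec add: HH)
  define N where "N = H * M * H"
  have N: "N \<in> carrier_mat ?m ?m" unfolding N_def using H M by auto
  have Nt: "transpose_mat N = N"
  proof -
    have "transpose_mat N = transpose_mat H * transpose_mat (H * M)"
      unfolding N_def by (rule transpose_mult[of _ ?m ?m], insert H M, auto)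
    also have "transpose_mat (H * M) = transpose_mat M * transpose_mat H"
      by (rule transpose_mult[of _ ?m ?m], insert H M, auto)
    finally show ?thesis unfolding Ht sym N_def using H M by simp
  qed
  have Ne: "N *\<^sub>v unit_vec ?m 0 = r \<cdot>\<^sub>v unit_vec ?m 0"
  proof -
    have "N *\<^sub>v unit_vec ?m 0 = H *\<^sub>v (M *\<^sub>v (H *\<^sub>v unit_vec ?m 0))"
      unfolding N_def using H M
      by (simp add: assoc_mult_mat_vec[of H ?m ?m "M * H" ?m] assoc_mult_mat_vec[of M ?m ?m H ?m])
    also have "\<dots> = r \<cdot>\<^sub>v unit_vec ?m 0" unfolding He Mw mult_mat_vec[OF H wc] Hw ..
    finally show ?thesis .
  qed
  have Ni0: "\<And>i. i < ?m \<Longrightarrow> N $$ (i,0) = (if i = 0 then r else 0)"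
  proof -
    fix i assume i: "i < ?m"
    have "N $$ (i,0) = (N *\<^sub>v unit_vec ?m 0) $ i" using i N by simp
    thus "N $$ (i,0) = (if i = 0 then r else 0)" unfolding Ne using i by simp
  qed
  have Nsym: "\<And>i j. i < ?m \<Longrightarrow> j < ?m \<Longrightarrow> N $$ (i,j) = N $$ (j,i)"
    using Nt N by (metis carrier_matD index_transpose_mat(1))
  obtain A1 A2 A3 A4 where sb: "split_block N 1 1 = (A1,A2,A3,A4)" by (cases "split_block N 1 1") auto
  note blk = split_block[OF sb, of n n]
  have A1: "A1 \<in> carrier_mat 1 1" and A4: "A4 \<in> carrier_mat n n" and Nb: "N = four_block_mat A1 A2 A3 A4"
    using blk N by auto
  have A2: "A2 = 0\<^sub>m 1 n" and A3: "A3 = 0\<^sub>m n 1"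
    using sb unfolding split_block_def Let_def using N by (auto intro!: eq_matI simp: Ni0 Nsym[of 0])
  have A4e: "\<And>i j. i < n \<Longrightarrow> j < n \<Longrightarrow> A4 $$ (i,j) = N $$ (Suc i, Suc j)"
    using sb unfolding split_block_def Let_def using N by auto
  have A4t: "transpose_mat A4 = A4"
    by (rule eq_matI, insert A4, auto simp: A4e Nsym)
  obtain Q' where Q': "Q' \<in> carrier_mat n n" "transpose_mat Q' * Q' = 1\<^sub>m n"
      "diagonal_mat (transpose_mat Q' * A4 * Q')"
    using Suc(1)[OF A4 A4t] by blast
  define Q1 where "Q1 = four_block_mat (1\<^sub>m 1) (0\<^sub>m 1 n) (0\<^sub>m n 1) Q'"
  have Q1: "Q1 \<in> carrier_mat ?m ?m" unfolding Q1_def using Q' by auto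
  have Q1t: "transpose_mat Q1 = four_block_mat (1\<^sub>m 1) (0\<^sub>m 1 n) (0\<^sub>m n 1) (transpose_mat Q')"
    unfolding Q1_def using Q' by (subst transpose_four_block_mat, auto)
  have Q1Q1: "transpose_mat Q1 * Q1 = 1\<^sub>m ?m"
    unfolding Q1t unfolding Q1_def using Q'
    by (subst mult_four_block_mat[of _ 1 1 _ n _ n _ _ 1 _ n], auto)
  have Q1NQ1: "transpose_mat Q1 * N * Q1 = four_block_mat A1 (0\<^sub>m 1 n) (0\<^sub>m n 1) (transpose_mat Q' * A4 * Q')"
    unfolding Q1t Nb A2 A3 unfolding Q1_def using Q' A1 A4
    by (subst mult_four_block_mat[of _ 1 1 _ n _ n _ _ 1 _ n], auto,
        subst mult_four_block_mat[of _ 1 1 _ n _ n _ _ 1 _ n], auto)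
  define Q where "Q = H * Q1"
  have Qc: "Q \<in> carrier_mat ?m ?m" unfolding Q_def using H Q1 by auto
  have Qt: "transpose_mat Q = transpose_mat Q1 * H" unfolding Q_def
    using H Q1 by (simp add: transpose_mult[of _ ?m ?m] Ht)
  have "transpose_mat Q * Q = transpose_mat Q1 * (H * H) * Q1" unfolding Qt unfolding Q_def
    using H Q1 by (simp add: assoc_mult_mat[of _ ?m ?m _ ?m _ ?m])
  also have "\<dots> = 1\<^sub>m ?m" using Q1 by (simp add: HH Q1Q1)
  finally have QQ: "transpose_mat Q * Q = 1\<^sub>m ?m" .
  have "transpose_mat Q * M * Q = transpose_mat Q1 * N * Q1" unfolding Qt unfolding Q_def N_def
    using H Q1 M by (simp add: assoc_mult_mat[of _ ?m ?m _ ?m _ ?m])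
  also have "diagonal_mat \<dots>" unfolding Q1NQ1 using Q'(3) Q' A1 A4
    unfolding diagonal_mat_def by auto
  finally have "diagonal_mat (transpose_mat Q * M * Q)" .
  with QQ Qc show ?case by blast
qed

lemma det_mat_diag: "det (mat_diag n f) = (\<Prod>i<n. (f i :: 'a :: comm_ring_1))"
proof -
  have ut: "upper_triangular (mat_diag n f)" unfolding upper_triangular_def mat_diag_def by auto
  have "det (mat_diag n f) = prod_list (diag_mat (mat_diag n f))"
    by (rule det_upper_triangular[OF ut mat_diag_dim])
  also have "diag_mat (mat_diag n f) = map f [0..<n]"
    unfolding diag_mat_def mat_diag_def by (auto intro!: nth_equalityI)
  also have "prod_list (map f [0..<n]) = (\<Prod>i<n. f i)"
    by (subst prod.distinct_set_conv_list[symmetric], auto simp: atLeast0LessThan)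
  finally show ?thesis .
qed

lemma transpose_mat_diag[simp]: "transpose_mat (mat_diag n f) = mat_diag n f"
  unfolding mat_diag_def by (rule eq_matI, auto)

lemma diagonal_eq_mat_diag: assumes A: "A \<in> carrier_mat n n" and d: "diagonal_mat A"
  shows "A = mat_diag n (\<lambda>i. A $$ (i,i))"
  using A d unfolding diagonal_mat_def mat_diag_def by (auto intro!: eq_matI)

lemma orth_det: assumes Q: "(Q :: real mat) \<in> carrier_mat n n" and QQ: "transpose_mat Q * Q = 1\<^sub>m n"
  shows "det Q = 1 \<or> det Q = -1"
proof -
  have "det (transpose_mat Q * Q) = det Q * det Q"
    using Q by (simp add: det_mult[of _ n] det_transpose)
  hence "det Q * det Q = 1" using QQ by simp
  thus ?thesis by (metis mult_cancel_left1 square_eq_1_iff power2_eq_square)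
qed

definition Emat :: "nat \<Rightarrow> real mat" where
  "Emat m = mat_diag m (\<lambda>i. if i = 0 then -1 else 1)"

lemma Emat_props: "Emat m \<in> carrier_mat m m" "Emat m * Emat m = 1\<^sub>m m"
  "transpose_mat (Emat m) = Emat m" "0 < m \<Longrightarrow> det (Emat m) = -1"
  "Emat m * mat_diag m f * Emat m = mat_diag m f"
proof -
  show "Emat m \<in> carrier_mat m m" "transpose_mat (Emat m) = Emat m" unfolding Emat_def by auto
  have "Emat m * Emat m = mat_diag m (\<lambda>i. 1)" unfolding Emat_def mat_diag_diag
    by (rule arg_cong[of _ _ "mat_diag m"], auto)
  thus "Emat m * Emat m = 1\<^sub>m m" by simp
  have "Emat m * mat_diag m f * Emat m = mat_diag m (\<lambda>i. (if i = 0 then -1 else 1) * f i * (if i = 0 then -1 else 1))"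
    unfolding Emat_def mat_diag_diag ..
  also have "\<dots> = mat_diag m f" by (rule arg_cong[of _ _ "mat_diag m"], auto)
  finally show "Emat m * mat_diag m f * Emat m = mat_diag m f" .
  assume m: "0 < m"
  have "det (Emat m) = (\<Prod>i<m. if i = 0 then -1 else 1)" unfolding Emat_def det_mat_diag ..
  also have "\<dots> = (\<Prod>i\<in>insert 0 ({..<m} - {0}). if i = 0 then -1 else 1)"
    using m by (intro prod.cong, auto)
  also have "\<dots> = -1" by (subst prod.insert, auto)
  finally show "det (Emat m) = -1" .
qed

lemma svd_SO:
  assumes D: "D \<in> carrier_mat m m" and dD: "det D = 1" and m: "0 < m"
  shows "\<exists>U V s. U \<in> SO_mat m \<and> V \<in> SO_mat m \<and> (\<forall>i<m. 0 < s i) \<and> U * D * V = mat_diag m s"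
proof -
  define M where "M = transpose_mat D * D"
  have Mc: "M \<in> carrier_mat m m" unfolding M_def using D by auto
  have Mt: "transpose_mat M = M" unfolding M_def using D by (simp add: transpose_mult[of _ m m])
  obtain Q where Q: "Q \<in> carrier_mat m m" "transpose_mat Q * Q = 1\<^sub>m m"
    and dg: "diagonal_mat (transpose_mat Q * M * Q)"
    using spectral[OF Mc Mt] by blast
  define lam where "lam = (\<lambda>i. (transpose_mat Q * M * Q) $$ (i,i))"
  have QMQ: "transpose_mat Q * M * Q = mat_diag m lam"
    unfolding lam_def by (rule diagonal_eq_mat_diag[OF _ dg], insert Q Mc, auto)
  have "\<exists>Q2 \<in> carrier_mat m m. transpose_mat Q2 * Q2 = 1\<^sub>m m \<and> det Q2 = 1 \<and>
     transpose_mat Q2 * M * Q2 = mat_diag m lam"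
  proof (cases "det Q = 1")
    case True thus ?thesis using Q QMQ by blast
  next
    case False
    hence dQ: "det Q = -1" using orth_det[OF Q] by auto
    let ?E = "Emat m"
    note E = Emat_props[of m]
    have tr: "transpose_mat (Q * ?E) = ?E * transpose_mat Q"
      using Q E by (simp add: transpose_mult[of _ m m])
    show ?thesis
    proof (intro bexI[of _ "Q * ?E"] conjI)
      show "Q * ?E \<in> carrier_mat m m" using Q E by auto
      have "transpose_mat (Q * ?E) * (Q * ?E) = ?E * (transpose_mat Q * Q) * ?E"
        unfolding tr using Q(1) E(1)
        by (simp add: assoc_mult_mat[of _ m m _ m _ m])
      also have "\<dots> = 1\<^sub>m m" unfolding Q(2) using E(1) by (simp add: E(2))
      finally show "transpose_mat (Q * ?E) * (Q * ?E) = 1\<^sub>m m" .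
      show "det (Q * ?E) = 1" using Q E m dQ by (simp add: det_mult[of _ m])
      have "transpose_mat (Q * ?E) * M * (Q * ?E) = ?E * (transpose_mat Q * M * Q) * ?E"
        unfolding tr using Q(1) E(1) Mc
        by (simp add: assoc_mult_mat[of _ m m _ m _ m])
      thus "transpose_mat (Q * ?E) * M * (Q * ?E) = mat_diag m lam" unfolding QMQ using E by simp
    qed
  qed
  then obtain V where V: "V \<in> carrier_mat m m" "transpose_mat V * V = 1\<^sub>m m" "det V = 1"
    and VMV: "transpose_mat V * M * V = mat_diag m lam" by blast
  define B where "B = D * V"
  have Bc: "B \<in> carrier_mat m m" unfolding B_def using D V by auto
  have Bt: "transpose_mat B = transpose_mat V * transpose_mat D" unfolding B_def
    using D V by (simp add: transpose_mult[of _ m m])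
  have BB: "transpose_mat B * B = mat_diag m lam" unfolding VMV[symmetric] Bt unfolding B_def M_def
    using D V by (simp add: assoc_mult_mat[of _ m m _ m _ m])
  have lam_nn: "\<And>i. i < m \<Longrightarrow> lam i \<ge> 0"
  proof -
    fix i assume i: "i < m"
    have "lam i = (transpose_mat B * B) $$ (i,i)" unfolding BB using i by (simp add: mat_diag_def)
    also have "\<dots> = (\<Sum>k\<in>{0..<m}. B $$ (k,i) * B $$ (k,i))" using i Bc
      by (simp add: scalar_prod_def)
    also have "\<dots> \<ge> 0" by (rule sum_nonneg, auto)
    finally show "lam i \<ge> 0" .
  qed
  have "det (mat_diag m lam) = det (transpose_mat B) * det B" unfolding BB[symmetric]
    using Bc by (simp add: det_mult[of _ m])
  also have "\<dots> = 1" using Bc D V dD unfolding B_def by (simp add: det_transpose[of _ m] det_mult[of _ m])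
  finally have "(\<Prod>i<m. lam i) = 1" unfolding det_mat_diag .
  hence lam0: "\<And>i. i < m \<Longrightarrow> lam i \<noteq> 0" by (metis lessThan_iff finite_lessThan prod_zero_iff zero_neq_one)
  define s where "s = (\<lambda>i. sqrt (lam i))"
  have spos: "\<And>i. i < m \<Longrightarrow> s i > 0" unfolding s_def using lam0 lam_nn
    by (simp add: order.not_eq_order_implies_strict)
  have ss: "\<And>i. i < m \<Longrightarrow> s i * s i = lam i" unfolding s_def using lam_nn by simp
  define Si where "Si = mat_diag m (\<lambda>i. 1 / s i)"
  define W where "W = B * Si"
  have Wc: "W \<in> carrier_mat m m" unfolding W_def Si_def using Bc by auto
  have Wt: "transpose_mat W = Si * transpose_mat B" unfolding W_def Si_def
    using Bc by (simp add: transpose_mult[of B m m _ m])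
  have "transpose_mat W * W = Si * (transpose_mat B * B) * Si" unfolding Wt unfolding W_def
    using Bc by (simp add: assoc_mult_mat[of _ m m _ m _ m] Si_def)
  also have "\<dots> = mat_diag m (\<lambda>i. 1 / s i * lam i * (1 / s i))" unfolding BB Si_def by simp
  also have "\<dots> = mat_diag m (\<lambda>i. 1)" unfolding mat_diag_def
    by (rule eq_matI, auto simp: ss[symmetric] field_simps dest: spos)
  finally have WW: "transpose_mat W * W = 1\<^sub>m m" by simp
  define U where "U = transpose_mat W"
  have Uc: "U \<in> carrier_mat m m" unfolding U_def using Wc by auto
  have UU: "transpose_mat U * U = 1\<^sub>m m" unfolding U_def
    using mat_mult_left_right_inverse[OF _ Wc WW] Wc by simp
  have dUe: "det U = det B * det Si" unfolding U_def using Wc Bc unfolding W_def Si_def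
    by (simp add: det_transpose[of _ m] det_mult[of _ m])
  have dB: "det B = 1" unfolding B_def using D V dD by (simp add: det_mult[of _ m])
  have dS: "det Si > 0" unfolding Si_def det_mat_diag using spos by (intro prod_pos, auto)
  have "det U > 0" using dUe dB dS by simp
  hence dU: "det U = 1" using orth_det[OF Uc UU] by auto
  have "U * D * V = Si * transpose_mat B * (D * V)" unfolding U_def Wt
    using D V Bc by (simp add: assoc_mult_mat[of _ m m _ m _ m] Si_def)
  also have "\<dots> = Si * (transpose_mat B * B)" unfolding B_def[symmetric]
    using Bc by (simp add: Si_def assoc_mult_mat[of _ m m _ m _ m])
  also have "\<dots> = mat_diag m s" unfolding BB Si_def mat_diag_diag unfolding mat_diag_def
    by (rule eq_matI, auto simp: ss[symmetric] dest: spos)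
  finally have UDV: "U * D * V = mat_diag m s" .
  show ?thesis
    by (intro exI[of _ U] exI[of _ V] exI[of _ s] conjI, insert Uc UU dU V spos UDV, auto simp: SO_mat_def)
qed

definition pmat :: "nat \<Rightarrow> (nat \<Rightarrow> nat) \<Rightarrow> real mat" where
  "pmat n p = mat n n (\<lambda>(a,b). if b = p a then 1 else 0)"

lemma pmat_carrier[simp]: "pmat n p \<in> carrier_mat n n" unfolding pmat_def by auto

lemma pmat_orth: assumes p: "p permutes {0..<n}"
  shows "transpose_mat (pmat n p) * pmat n p = 1\<^sub>m n"
proof (rule eq_matI)
  fix a b assume a: "a < dim_row (1\<^sub>m n)" and b: "b < dim_col (1\<^sub>m n)"
  have "(transpose_mat (pmat n p) * pmat n p) $$ (a,b) =
     (\<Sum>k\<in>{0..<n}. (\<lambda>k. (if a = k then 1 else 0) * (if b = k then 1 else (0::real))) (p k))"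
    using a b unfolding pmat_def by (simp add: scalar_prod_def)
  also have "\<dots> = (\<Sum>k\<in>{0..<n}. (if a = k then 1 else 0) * (if b = k then 1 else (0::real)))"
    by (rule sum.reindex_bij_betw[OF permutes_imp_bij[OF p]])
  also have "\<dots> = (if a = b then 1 else 0)"
    using a b by (simp add: if_distrib[of "\<lambda>x. x * _"] cong: if_cong)
  finally show "(transpose_mat (pmat n p) * pmat n p) $$ (a,b) = 1\<^sub>m n $$ (a,b)" using a b by simp
qed (auto simp: pmat_def)

lemma pmat_conj: assumes p: "p permutes {0..<n}"
  shows "pmat n p * mat_diag n f * transpose_mat (pmat n p) = mat_diag n (\<lambda>i. f (p i))"
proof -
  have pin: "\<And>a. a < n \<Longrightarrow> p a < n" using p by (simp add: permutes_in_image)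
  have inj: "\<And>a b. p a = p b \<Longrightarrow> a = b" using p by (metis permutes_inj injD)
  show ?thesis
  proof (rule eq_matI)
    fix a b assume a: "a < dim_row (mat_diag n (\<lambda>i. f (p i)))" and b: "b < dim_col (mat_diag n (\<lambda>i. f (p i)))"
    have a: "a < n" using a by (simp add: mat_diag_def)
    have b: "b < n" using b by (simp add: mat_diag_def)
    have "(pmat n p * mat_diag n f * transpose_mat (pmat n p)) $$ (a,b) =
      (\<Sum>l\<in>{0..<n}. (if l = p a then 1 else 0) * f l * (if l = p b then 1 else 0))"
      using a b unfolding mat_diag_mult_right[OF pmat_carrier] unfolding pmat_def by (simp add: scalar_prod_def)
    also have "\<dots> = (\<Sum>l\<in>{0..<n}. if l = p a then (if p a = p b then f (p a) else 0) else 0)"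
      by (rule sum.cong, auto)
    also have "\<dots> = (if a = b then f (p a) else 0)" using pin[OF a] inj by auto
    finally show "(pmat n p * mat_diag n f * transpose_mat (pmat n p)) $$ (a,b) = mat_diag n (\<lambda>i. f (p i)) $$ (a,b)"
      using a b by (simp add: mat_diag_def)
  qed (auto simp: pmat_def mat_diag_def)
qed

lemma perm_SO: assumes n: "0 < n" and p: "p permutes {0..<n}"
  shows "\<exists>P \<in> SO_mat n. \<forall>f. P * mat_diag n f * transpose_mat P = mat_diag n (\<lambda>i. f (p i))"
proof (cases "det (pmat n p) = 1")
  case True
  thus ?thesis using pmat_orth[OF p] pmat_conj[OF p] by (intro bexI[of _ "pmat n p"]) (auto simp: SO_mat_def)
next
  case False
  let ?P = "pmat n p" let ?E = "Emat n"
  note E = Emat_props[of n]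
  have P: "?P \<in> carrier_mat n n" by simp
  have dP: "det ?P = -1" using False orth_det[OF P pmat_orth[OF p]] by auto
  have tr: "transpose_mat (?E * ?P) = transpose_mat ?P * ?E"
    using E by (simp add: transpose_mult[of ?E n n ?P n])
  have "transpose_mat (?E * ?P) * (?E * ?P) = transpose_mat ?P * (?E * ?E) * ?P"
    unfolding tr using E(1) P by (simp add: assoc_mult_mat[of _ n n _ n _ n])
  also have "\<dots> = 1\<^sub>m n" unfolding E(2) using pmat_orth[OF p] P
    by (simp add: right_mult_one_mat[of _ n n])
  finally have o: "transpose_mat (?E * ?P) * (?E * ?P) = 1\<^sub>m n" .
  have d: "det (?E * ?P) = 1" using E n dP by (simp add: det_mult[of _ n])
  have c: "\<And>f. ?E * ?P * mat_diag n f * transpose_mat (?E * ?P) = ?E * (?P * mat_diag n f * transpose_mat ?P) * ?E"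
    unfolding tr using E(1) P by (simp add: assoc_mult_mat[of _ n n _ n _ n] mult_carrier_mat[of _ n n _ n])
  show ?thesis
    by (intro bexI[of _ "?E * ?P"] allI, unfold c pmat_conj[OF p] E(5), insert o d E(1), auto simp: SO_mat_def)
qed

lemma SO_carrier: "A \<in> SO_mat m \<Longrightarrow> A \<in> carrier_mat m m" unfolding SO_mat_def by auto

lemma SO_right: assumes A: "A \<in> SO_mat m" shows "A * transpose_mat A = 1\<^sub>m m"
  using A mat_mult_left_right_inverse[of "transpose_mat A" m A] unfolding SO_mat_def by auto

lemma SO_mult: assumes A: "A \<in> SO_mat m" and B: "B \<in> SO_mat m" shows "A * B \<in> SO_mat m"
proof -
  have Ac: "A \<in> carrier_mat m m" and Bc: "B \<in> carrier_mat m m" using A B by (auto simp: SO_mat_def)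
  have "transpose_mat (A * B) * (A * B) = transpose_mat B * (transpose_mat A * A) * B"
    using Ac Bc by (simp add: transpose_mult[of A m m B m] assoc_mult_mat[of _ m m _ m _ m])
  also have "\<dots> = 1\<^sub>m m" using A B Bc unfolding SO_mat_def by simp
  finally show ?thesis using A B Ac Bc unfolding SO_mat_def by (simp add: det_mult[of _ m])
qed

lemma SO_transpose: assumes A: "A \<in> SO_mat m" shows "transpose_mat A \<in> SO_mat m"
  using A SO_right[OF A] unfolding SO_mat_def by (auto simp: det_transpose[of _ m])

lemma mat_inv_eq: assumes D: "D \<in> carrier_mat m m" and X: "X \<in> carrier_mat m m"
  and DX: "D * X = 1\<^sub>m m" and XD: "X * D = 1\<^sub>m m"
  shows "mat_inv m D = X"
proof -
  let ?P = "\<lambda>B. B \<in> carrier_mat m m \<and> D * B = 1\<^sub>m m \<and> B * D = 1\<^sub>m m"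
  have "?P (SOME B. ?P B)" by (rule someI[of ?P X], insert X DX XD, auto)
  then obtain Y where Y: "Y \<in> carrier_mat m m" "Y * D = 1\<^sub>m m" and YS: "(SOME B. ?P B) = Y" by auto
  have "Y = Y * (D * X)" using Y by (simp add: DX)
  also have "\<dots> = (Y * D) * X" by (rule assoc_mult_mat[symmetric, OF Y(1) D X])
  also have "\<dots> = X" using X Y by simp
  finally show ?thesis unfolding mat_inv_def YS by simp
qed

theorem mainTheorem16:
  fixes d :: nat and D :: "real mat"
  assumes "D \<in> SL_mat (d + 1)" and "D \<notin> SO_mat (d + 1)"
  shows "\<exists>(n::nat) (R :: nat \<Rightarrow> real mat) (a :: nat \<Rightarrow> int) (r :: nat \<Rightarrow> real).
           n > 0 \<and>
           (\<forall>i\<le>n. R i \<in> SO_mat (d + 1)) \<and>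
           (\<forall>i\<in>{1..n}. a i \<in> {-1, 1}) \<and>
           word_prod (d + 1) D R a n = mat_diag (d + 1) (\<lambda>i. r (i + 1)) \<and>
           0 < r (d + 1) \<and>
           (\<forall>i\<in>{1..d}. r (d + 1) < r i) \<and>
           (\<forall>i\<in>{2..d}. r i ^ d < (\<Prod>j\<in>{1..d}. r j))"
proof -
  define m where "m = d + 1"
  have m0: "0 < m" unfolding m_def by simp
  have Dc: "D \<in> carrier_mat m m" and dD: "det D = 1" using assms(1) unfolding SL_mat_def m_def by auto
  have DnSO: "D \<notin> SO_mat m" using assms(2) unfolding m_def .
  obtain U V s where U: "U \<in> SO_mat m" and V: "V \<in> SO_mat m" and spos: "\<forall>i<m. 0 < s i"
    and UDV: "U * D * V = mat_diag m s" using svd_SO[OF Dc dD m0] by blast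
  have Uc: "U \<in> carrier_mat m m" and Vc: "V \<in> carrier_mat m m" using U V by (auto simp: SO_mat_def)
  have UtU: "transpose_mat U * U = 1\<^sub>m m" and VtV: "transpose_mat V * V = 1\<^sub>m m"
    using U V by (auto simp: SO_mat_def)
  have UUt: "U * transpose_mat U = 1\<^sub>m m" and VVt: "V * transpose_mat V = 1\<^sub>m m"
    using SO_right[OF U] SO_right[OF V] .
  define S where "S = mat_diag m s"
  define Si where "Si = mat_diag m (\<lambda>i. 1 / s i)"
  have Sc: "S \<in> carrier_mat m m" and Sic: "Si \<in> carrier_mat m m" unfolding S_def Si_def by auto
  note carr = Uc Vc Sc Sic Dc
  note asc = assoc_mult_mat[of _ m m _ m _ m] mult_carrier_mat[of _ m m _ m]
  have Deq: "D = transpose_mat U * S * transpose_mat V"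
  proof -
    have "transpose_mat U * S * transpose_mat V = (transpose_mat U * U) * D * (V * transpose_mat V)"
      unfolding S_def UDV[symmetric] using carr by (simp add: asc)
    thus ?thesis using Dc by (simp add: UtU VVt)
  qed
  have SSi: "S * Si = 1\<^sub>m m" "Si * S = 1\<^sub>m m" unfolding S_def Si_def mat_diag_diag
    unfolding mat_diag_def using spos by (auto intro!: eq_matI)
  have Dinv: "mat_inv m D = V * Si * U"
  proof (rule mat_inv_eq[OF Dc])
    show "V * Si * U \<in> carrier_mat m m" using carr by simp
    have "D * (V * Si * U) = transpose_mat U * (S * (transpose_mat V * V) * Si) * U"
      unfolding Deq using carr by (simp add: asc)
    also have "\<dots> = 1\<^sub>m m" using carr by (simp add: VtV SSi UtU)
    finally show "D * (V * Si * U) = 1\<^sub>m m" .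
    have "V * Si * U * D = V * (Si * (U * transpose_mat U) * S) * transpose_mat V"
      unfolding Deq using carr by (simp add: asc)
    also have "\<dots> = 1\<^sub>m m" using carr by (simp add: UUt SSi VVt)
    finally show "V * Si * U * D = 1\<^sub>m m" .
  qed
  have "\<exists>i j. i < m \<and> j < m \<and> s j < s i"
  proof (rule ccontr)
    assume "\<not> ?thesis"
    hence le: "\<And>i j. i < m \<Longrightarrow> j < m \<Longrightarrow> s i \<le> s j" by (meson not_le)
    have eq: "\<And>i. i < m \<Longrightarrow> s i = s 0" using le m0 by (meson antisym)
    have "det S = det U * det D * det V" unfolding S_def UDV[symmetric] using carr
      by (simp add: det_mult[of _ m])
    hence "det S = 1" using U V dD by (simp add: SO_mat_def)
    hence "(\<Prod>i<m. s i) = 1" unfolding S_def det_mat_diag .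
    moreover have "(\<Prod>i<m. s i) = (\<Prod>i<m. s 0)" by (rule prod.cong[OF refl], rule eq, simp)
    ultimately have "s 0 ^ m = 1" by simp
    hence s01: "s 0 = 1" using power_eq_iff_eq_base[of m "s 0" 1] spos m0 by auto
    have eq1: "\<And>i. i < m \<Longrightarrow> s i = 1" using eq s01 by metis
    have S1: "S = 1\<^sub>m m" unfolding S_def mat_diag_def using eq1 by (auto intro!: eq_matI)
    have D1: "D = transpose_mat U * transpose_mat V" using Deq Uc unfolding S1 by simp
    have "transpose_mat D * D = V * (U * transpose_mat U) * transpose_mat V" unfolding D1
      using carr by (simp add: transpose_mult[of _ m m _ m] asc)
    also have "\<dots> = 1\<^sub>m m" using carr by (simp add: UUt VVt)
    finally have "D \<in> SO_mat m" using Dc dD unfolding SO_mat_def by simp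
    thus False using DnSO by simp
  qed
  then obtain i j where ij: "i < m" "j < m" "s j < s i" by blast
  have inj: "i \<noteq> j" using ij by auto
  have d0: "d \<noteq> 0" using ij inj unfolding m_def by auto
  define tau where "tau = Transposition.transpose i j"
  define t1 where "t1 = Transposition.transpose 0 i"
  define pi where "pi = t1 \<circ> Transposition.transpose d (t1 j)"
  have set: "{0..<m} = {0..<m}" ..
  have t1j: "t1 j < m" "t1 j \<noteq> 0" unfolding t1_def using ij inj m0
    by (auto simp: transpose_def)
  have tau_p: "tau permutes {0..<m}" unfolding tau_def using ij by (intro permutes_swap_id, auto)
  have pi_p: "pi permutes {0..<m}" unfolding pi_def t1_def using ij t1j m0 unfolding m_def
    by (intro permutes_compose permutes_swap_id, auto simp: t1_def)
  have pi0: "pi 0 = i" unfolding pi_def using t1j d0 by (simp add: t1_def transpose_def)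
  have pid: "pi d = j" unfolding pi_def by (simp add: t1_def transpose_def)
  have tau_i: "tau i = j" and tau_j: "tau j = i" unfolding tau_def by auto
  have pi_mid: "\<And>k. 0 < k \<Longrightarrow> k < d \<Longrightarrow> pi k \<noteq> i \<and> pi k \<noteq> j"
  proof -
    fix k :: nat assume k: "0 < k" "k < d"
    have pinj: "inj pi" by (rule permutes_inj[OF pi_p])
    show "pi k \<noteq> i \<and> pi k \<noteq> j" using injD[OF pinj, of k 0] injD[OF pinj, of k d] pi0 pid k by auto
  qed
  obtain A where A: "A \<in> SO_mat m" and Aconj: "\<And>f. A * mat_diag m f * transpose_mat A = mat_diag m (\<lambda>k. f (pi k))"
    using perm_SO[OF m0 pi_p] by blast
  obtain B where B: "B \<in> SO_mat m" and Bconj: "\<And>f. B * mat_diag m f * transpose_mat B = mat_diag m (\<lambda>k. f (tau k))"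
    using perm_SO[OF m0 tau_p] by blast
  have Ac: "A \<in> carrier_mat m m" and Bc: "B \<in> carrier_mat m m" using A B by (auto simp: SO_mat_def)
  define R where "R = (\<lambda>k::nat. if k = 0 then A * U else if k = 1 then V * B * transpose_mat V
     else transpose_mat U * transpose_mat B * transpose_mat A)"
  define a where "a = (\<lambda>k::nat. if k = 1 then (1::int) else -1)"
  define r where "r = (\<lambda>k. s (pi (k - 1)) / s (tau (pi (k - 1))))"
  have RSO: "\<forall>k\<le>2. R k \<in> SO_mat m" unfolding R_def
    using A B U V by (auto intro!: SO_mult SO_transpose)
  have word: "word_prod m D R a 2 = A * S * (B * Si * transpose_mat B) * transpose_mat A"
  proof -
    have "word_prod m D R a 2 = A * U * D * (V * B * transpose_mat V) * (V * Si * U) *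
        (transpose_mat U * transpose_mat B * transpose_mat A)"
      by (simp add: numeral_2_eq_2 R_def a_def mat_pm_pow_def Dinv)
    also have "\<dots> = A * ((U * transpose_mat U) * S * ((transpose_mat V * V) * B * (transpose_mat V * V)) * Si * (U * transpose_mat U)
        * transpose_mat B * transpose_mat A)"
      unfolding Deq using carr Ac Bc by (simp add: asc)
    also have "\<dots> = A * S * (B * Si * transpose_mat B) * transpose_mat A"
      using carr Ac Bc by (simp add: asc UUt VtV)
    finally show ?thesis .
  qed
  also have "B * Si * transpose_mat B = mat_diag m (\<lambda>k. 1 / s (tau k))" unfolding Si_def Bconj ..
  also have "A * S * mat_diag m (\<lambda>k. 1 / s (tau k)) = A * mat_diag m (\<lambda>k. s k * (1 / s (tau k)))"
    unfolding S_def using Ac by (simp add: assoc_mult_mat[of _ m m _ m _ m])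
  also have "\<dots> * transpose_mat A = mat_diag m (\<lambda>k. s (pi k) * (1 / s (tau (pi k))))" unfolding Aconj ..
  also have "\<dots> = mat_diag m (\<lambda>k. r (k + 1))" unfolding r_def by simp
  finally have W: "word_prod m D R a 2 = mat_diag m (\<lambda>k. r (k + 1))" .
  have sij: "0 < s i" "0 < s j" using spos ij by auto
  have rd: "r (d + 1) = s j / s i" unfolding r_def using pid tau_j by simp
  have r1: "r 1 = s i / s j" unfolding r_def using pi0 tau_i by simp
  have rmid: "\<And>k. 2 \<le> k \<Longrightarrow> k \<le> d \<Longrightarrow> r k = 1"
  proof -
    fix k assume k: "2 \<le> k" "k \<le> d"
    have pk: "pi (k - 1) \<noteq> i" "pi (k - 1) \<noteq> j" using pi_mid[of "k - 1"] k by auto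
    have "tau (pi (k - 1)) = pi (k - 1)" unfolding tau_def using pk by (simp add: transpose_def)
    moreover have "pi (k - 1) < m" using pi_p k unfolding m_def by (simp add: permutes_in_image)
    ultimately show "r k = 1" unfolding r_def using spos by (metis less_irrefl divide_self)
  qed
  have lt1: "s j / s i < 1" using sij ij by simp
  have gt1: "1 < s i / s j" using sij ij by simp
  have prod: "(\<Prod>k\<in>{1..d}. r k) = s i / s j"
  proof -
    have "{1..d} = insert 1 {2..d}" using d0 by auto
    hence "(\<Prod>k\<in>{1..d}. r k) = r 1 * (\<Prod>k\<in>{2..d}. r k)" by simp
    also have "(\<Prod>k\<in>{2..d}. r k) = 1" using rmid by (intro prod.neutral, auto)
    finally show ?thesis using r1 by simp
  qed
  show ?thesis
  proof (intro exI[of _ 2] exI[of _ R] exI[of _ a] exI[of _ r] conjI)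
    show "word_prod (d + 1) D R a 2 = mat_diag (d + 1) (\<lambda>i. r (i + 1))" using W unfolding m_def .
    show "\<forall>i\<le>2. R i \<in> SO_mat (d + 1)" using RSO unfolding m_def .
    show "\<forall>i\<in>{1..2}. a i \<in> {-1, 1}" unfolding a_def by auto
    show "0 < r (d + 1)" unfolding rd using sij by simp
    show "\<forall>k\<in>{1..d}. r (d + 1) < r k"
    proof
      fix k assume k: "k \<in> {1..d}"
      show "r (d + 1) < r k"
      proof (cases "k = 1")
        case True thus ?thesis using rd r1 lt1 gt1 by simp
      next
        case False thus ?thesis using k rmid[of k] rd lt1 by simp
      qed
    qed
    show "\<forall>k\<in>{2..d}. r k ^ d < (\<Prod>j\<in>{1..d}. r j)" using rmid prod gt1 by simp
  qed simp
qed

end
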